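(* Let $X$ be a Polish space and $2\le\xi<\omega_1$. (1) If there is a monotone $\Sigma^0_\xi$ hull operation on $\mathcal{M}$ with respect to $\mathcal{M}$, then there is a monotone $\Pi^0_{\xi+1}$ hull operation on $\mathtt{Baire}$ with respect to $\mathcal{M}$. (2) If there is a monotone $\Pi^0_\xi$ hull operation on $\mathcal{M}$ with respect to $\mathcal{M}$, then there is a monotone $\Pi^0_\xi$ hull operation on $\mathtt{Baire}$ with respect to $\mathcal{M}$.
   Context: $\mathcal{M}$ is the $\sigma$-ideal of meager subsets of $X$, and $\mathtt{Baire}$ is the $\sigma$-algebra of subsets of $X$ with the Baire property. A Borel hull operation on a family $\mathcal{F}$ with respect to $\mathcal{M}$ is a map $\psi$ from $\mathcal{F}$ to the Borel sets with $A\subseteq\psi(A)$ and $\psi(A)\setminus A\in\mathcal{M}$ for every $A\in\mathcal{F}$. It is monotone if $A_1\subseteq A_2$ in $\mathcal{F}$ implies $\psi(A_1)\subseteq\psi(A_2)$. It is a $\mathcal{K}$ hull operation, for a Borel class $\mathcal{K}$ such as $\Sigma^0_\xi$ or $\Pi^0_\xi$, if all its values belong to $\mathcal{K}$. *)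

theory Defs
  imports "HOL-Analysis.Analysis"
begin

definition nowhere_dense :: "'a::topological_space set \<Rightarrow> bool" where
  "nowhere_dense A \<longleftrightarrow> interior (closure A) = {}"

definition meager :: "'a::topological_space set \<Rightarrow> bool" where
  "meager A \<longleftrightarrow> (\<exists>F :: nat \<Rightarrow> 'a set. (\<forall>n. nowhere_dense (F n)) \<and> A \<subseteq> (\<Union>n. F n))"

definition meager_ideal :: "'a::topological_space set set" where
  "meager_ideal = {A. meager A}"

definition baire_property :: "'a::topological_space set \<Rightarrow> bool" where
  "baire_property A \<longleftrightarrow> (\<exists>U. open U \<and> meager ((A - U) \<union> (U - A)))"

definition Baire_sets :: "'a::topological_space set set" where
  "Baire_sets = {A. baire_property A}"

text \<open>A countable ordinal is represented by (the order type of) a well-order on a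
subset of nat.  The ordinal
is 0 iff the field is empty, 1 iff the field is a singleton.\<close>

definition countable_ordinal :: "nat rel \<Rightarrow> bool" where
  "countable_ordinal r \<longleftrightarrow> Well_order r"

definition ord_is_one :: "nat rel \<Rightarrow> bool" where
  "ord_is_one r \<longleftrightarrow> (\<exists>a. Field r = {a})"

definition ord_ge_two :: "nat rel \<Rightarrow> bool" where
  "ord_ge_two r \<longleftrightarrow> (\<exists>a b. a \<in> Field r \<and> b \<in> Field r \<and> a \<noteq> b)"

definition ord_is_succ :: "nat rel \<Rightarrow> nat rel \<Rightarrow> bool" where
  "ord_is_succ r' r \<longleftrightarrow> Well_order r' \<and> (r, r') \<in> ordLess \<and>
     (\<forall>s :: nat rel. (r, s) \<in> ordLess \<longrightarrow> (r', s) \<in> ordLeq)"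

text \<open>Additive Borel classes: Sigma^0_1 = open sets; for xi > 1, Sigma^0_xi =
countable unions of sets from Pi^0_eta, 1 <= eta < xi, where Pi^0_eta are the
complements of Sigma^0_eta sets.\<close>
inductive borel_Sigma :: "nat rel \<Rightarrow> 'a::topological_space set \<Rightarrow> bool" where
  Sigma_open: "Well_order r \<Longrightarrow> ord_is_one r \<Longrightarrow> open A \<Longrightarrow> borel_Sigma r A"
| Sigma_union: "Well_order r \<Longrightarrow>
     (\<And>n. \<exists>s. (s, r) \<in> ordLess \<and> Field s \<noteq> {} \<and> borel_Sigma s (- F n)) \<Longrightarrow>
     borel_Sigma r (\<Union>n::nat. F n)"

definition borel_Pi :: "nat rel \<Rightarrow> 'a::topological_space set \<Rightarrow> bool" where
  "borel_Pi r A \<longleftrightarrow> borel_Sigma r (- A)"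

definition hull_operation ::
  "'a::topological_space set set \<Rightarrow> ('a set \<Rightarrow> 'a set) \<Rightarrow> bool" where
  "hull_operation F \<psi> \<longleftrightarrow>
     (\<forall>A\<in>F. \<psi> A \<in> sets borel \<and> A \<subseteq> \<psi> A \<and> \<psi> A - A \<in> meager_ideal)"

definition monotone_hull_op ::
  "'a::topological_space set set \<Rightarrow> ('a set \<Rightarrow> 'a set) \<Rightarrow> bool" where
  "monotone_hull_op F \<psi> \<longleftrightarrow>
     hull_operation F \<psi> \<and> (\<forall>A1\<in>F. \<forall>A2\<in>F. A1 \<subseteq> A2 \<longrightarrow> \<psi> A1 \<subseteq> \<psi> A2)"

definition K_valued :: "('a set \<Rightarrow> bool) \<Rightarrow> 'a set set \<Rightarrow> ('a set \<Rightarrow> 'a set) \<Rightarrow> bool" where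
  "K_valued K F \<psi> \<longleftrightarrow> (\<forall>A\<in>F. K (\<psi> A))"

end

theory Submission
  imports Defs
begin


lemma exists_one_below:
  assumes wo: "Well_order r" and two: "ord_ge_two r"
  shows "\<exists>o1. Well_order o1 \<and> ord_is_one o1 \<and> (o1, r) \<in> ordLess"
proof -
  have wr: "wo_rel r" using wo by (simp add: wo_rel_def)
  have ne: "Field r \<noteq> {}" using two unfolding ord_ge_two_def by auto
  obtain z where z: "wo_rel.isMinim r (Field r) z"
    using wo_rel.Well_order_isMinim_exists[OF wr, of "Field r"] ne by auto
  have zF: "z \<in> Field r" and zl: "\<forall>a\<in>Field r. (z,a) \<in> r"
    using z by (auto simp: wo_rel.isMinim_def[OF wr])
  have refl: "Refl r" using wo by (simp add: order_on_defs)
  have antis: "antisym r" using wo by (simp add: order_on_defs)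
  have zz: "(z,z) \<in> r" using refl zF by (meson refl_onD)
  have und: "under r z \<subseteq> {z}"
  proof
    fix x assume "x \<in> under r z"
    then have "(x,z) \<in> r" by (simp add: under_def)
    then have "x \<in> Field r" by (auto simp: Field_def)
    then have "(z,x) \<in> r" using zl by auto
    with \<open>(x,z) \<in> r\<close> show "x \<in> {z}" using antis by (auto simp: antisym_def)
  qed
  have of: "ofilter r {z}" using zF und by (simp add: ofilter_def)
  obtain a b where ab: "a \<in> Field r" "b \<in> Field r" "a \<noteq> b" using two unfolding ord_ge_two_def by auto
  have lt: "{z} < Field r" using ab zF by (metis psubsetI singletonD empty_subsetI insert_subset)
  have "(Restr r {z}, r) \<in> ordLess" using ofilter_ordLess[OF wo] of lt wr by (simp add: wo_rel.ofilter_def[OF wr])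
  moreover have "Well_order (Restr r {z})" using Well_order_Restr wo by blast
  moreover have "Field (Restr r {z}) = {z}" using zz by (auto simp: Field_def)
  ultimately show ?thesis unfolding ord_is_one_def by blast
qed

lemma one_minimal:
  assumes "ord_is_one s" and "(s', s) \<in> ordLess" and "Field s' \<noteq> {}"
  shows False
proof -
  obtain a where a: "Field s = {a}" using assms(1) unfolding ord_is_one_def by auto
  from assms(2) obtain f where wo: "Well_order s'" and e: "embedS s' s f"
    unfolding ordLess_def by auto
  have emb: "embed s' s f" and nb: "\<not> bij_betw f (Field s') (Field s)" using e by (auto simp: embedS_def)
  have inj: "inj_on f (Field s')" using embed_inj_on[OF wo emb] .
  have sub: "f ` Field s' \<subseteq> {a}" using embed_in_Field[OF emb] a by auto
  have "f ` Field s' = {a}" using sub assms(3) by auto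
  then have "bij_betw f (Field s') (Field s)" using inj a by (simp add: bij_betw_def)
  with nb show False by simp
qed



lemma open_fsigma:
  fixes U :: "'a::metric_space set"
  assumes "open U"
  shows "\<exists>D::nat \<Rightarrow> 'a set. (\<forall>k. closed (D k)) \<and> U = (\<Union>k. D k)"
proof -
  have "openin euclidean U" using assms by (simp only: open_openin)
  then have "fsigma_in euclidean U"
    by (rule open_imp_fsigma_in[OF metrizable_space_euclidean])
  then have "\<exists>C. (\<forall>n. closedin euclidean (C n)) \<and> (\<forall>n. C n \<subseteq> C(Suc n)) \<and> \<Union> (range C) = U"
    using fsigma_in_ascending[of euclidean U] by (simp only:)
  then obtain C where C0: "(\<forall>n. closedin euclidean (C n)) \<and> (\<forall>n. C n \<subseteq> C(Suc n)) \<and> \<Union> (range C) = U"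
    by (rule exE)
  have C: "\<forall>n. closedin euclidean (C n)" "\<Union> (range C) = U" using C0 by (rule conjunct1, (rule conjunct2[THEN conjunct2]))
  have "\<forall>n. closed (C n)" using C(1) by simp
  moreover have "U = (\<Union>k. C k)" using C(2) by (rule sym)
  ultimately show ?thesis by (intro exI[of _ C] conjI) auto
qed

lemma Sigma_unionI:
  fixes G :: "nat \<Rightarrow> 'a::topological_space set"
  assumes wo: "Well_order r" and eq: "X = (\<Union>n. G n)"
    and wit: "\<forall>n. \<exists>s. (s, r) \<in> ordLess \<and> Field s \<noteq> {} \<and> borel_Sigma s (- G n)"
  shows "borel_Sigma r X"
proof -
  have "borel_Sigma r (\<Union>n. G n)"
  proof (rule Sigma_union[OF wo])
    fix n show "\<exists>s. (s, r) \<in> ordLess \<and> Field s \<noteq> {} \<and> borel_Sigma s (- G n)" using wit by (rule spec)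
  qed
  then show ?thesis using eq by simp
qed

lemma ge_two_not_one: "ord_ge_two r \<Longrightarrow> ord_is_one r \<Longrightarrow> False"
  unfolding ord_ge_two_def ord_is_one_def by auto

lemma Sigma_ge2_cases:
  assumes "ord_ge_two r" "borel_Sigma r X"
  shows "\<exists>F::nat \<Rightarrow> 'a::topological_space set. X = (\<Union>n. F n) \<and> (\<forall>n. \<exists>s. (s, r) \<in> ordLess \<and> Field s \<noteq> {} \<and> borel_Sigma s (- F n))"
  using assms(2)
proof cases
  case (Sigma_open) then show ?thesis using ge_two_not_one assms(1) by blast
next
  case (Sigma_union F) then show ?thesis by blast
qed

lemma Sigma_closed_Un:
  fixes C :: "'a::topological_space set"
  assumes wo: "Well_order r" and two: "ord_ge_two r" and S: "borel_Sigma r X" and c: "closed C"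
  shows "borel_Sigma r (C \<union> X)"
proof -
  obtain F :: "nat \<Rightarrow> _" where F: "X = (\<Union>n. F n)" "\<forall>n. \<exists>s. (s, r) \<in> ordLess \<and> Field s \<noteq> {} \<and> borel_Sigma s (- F n)"
    using Sigma_ge2_cases[OF two S] by blast
  obtain o1 where o1: "Well_order o1" "ord_is_one o1" "(o1, r) \<in> ordLess"
    using exists_one_below[OF wo two] by blast
  have o1ne: "Field o1 \<noteq> {}" using o1(2) unfolding ord_is_one_def by auto
  define G where "G n = (case n of 0 \<Rightarrow> C | Suc m \<Rightarrow> F m)" for n
  have G0: "G 0 = C" and GS: "\<And>m. G (Suc m) = F m" by (simp_all add: G_def)
  have "C \<union> X = (\<Union>n. G n)"
  proof
    show "C \<union> X \<subseteq> (\<Union>n. G n)"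
    proof
      fix x assume "x \<in> C \<union> X"
      then show "x \<in> (\<Union>n. G n)"
      proof
        assume "x \<in> C" then have "x \<in> G 0" using G0 by simp
        then show ?thesis by blast
      next
        assume "x \<in> X" then obtain m where "x \<in> F m" using F(1) by auto
        then have "x \<in> G (Suc m)" using GS by simp
        then show ?thesis by blast
      qed
    qed
    show "(\<Union>n. G n) \<subseteq> C \<union> X"
    proof
      fix x assume "x \<in> (\<Union>n. G n)"
      then obtain n where n: "x \<in> G n" by auto
      show "x \<in> C \<union> X"
      proof (cases n)
        case 0 then show ?thesis using n G0 by auto
      next
        case (Suc m) then show ?thesis using n GS F(1) by auto
      qed
    qed
  qed
  moreover have "\<forall>n. \<exists>s. (s, r) \<in> ordLess \<and> Field s \<noteq> {} \<and> borel_Sigma s (- G n)"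
  proof
    fix n show "\<exists>s. (s, r) \<in> ordLess \<and> Field s \<noteq> {} \<and> borel_Sigma s (- G n)"
    proof (cases n)
      case 0
      have "borel_Sigma o1 (- C)" by (intro Sigma_open[OF o1(1,2)] open_Compl) (use c in blast)
      then show ?thesis using 0 o1 o1ne G_def by auto
    next
      case (Suc m) then show ?thesis using F(2) G_def by auto
    qed
  qed
  ultimately show ?thesis by (rule Sigma_unionI[OF wo])
qed

lemma Sigma_closed:
  fixes C :: "'a::topological_space set"
  assumes wo: "Well_order r" and two: "ord_ge_two r" and c: "closed C"
  shows "borel_Sigma r C"
proof -
  obtain o1 where o1: "Well_order o1" "ord_is_one o1" "(o1, r) \<in> ordLess"
    using exists_one_below[OF wo two] by blast
  have o1ne: "Field o1 \<noteq> {}" using o1(2) unfolding ord_is_one_def by auto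
  have "borel_Sigma o1 (- C)" by (intro Sigma_open[OF o1(1,2)] open_Compl) (use c in blast)
  then have "borel_Sigma r (\<Union>n::nat. C)" using Sigma_union[OF wo, of "\<lambda>_. C"] o1 o1ne by blast
  then show ?thesis by simp
qed

lemma Sigma_open_Un:
  fixes U :: "'a::metric_space set"
  assumes wo: "Well_order s" and ne: "Field s \<noteq> {}" and S: "borel_Sigma s X" and o: "open U"
  shows "borel_Sigma s (U \<union> X)"
  using S
proof cases
  case Sigma_open then show ?thesis using o by (intro borel_Sigma.Sigma_open) auto
next
  case (Sigma_union F)
  obtain t :: "nat rel" where t: "(t, s) \<in> ordLess" "Field t \<noteq> {}" using Sigma_union(3)[of 0] by blast
  have n1: "\<not> ord_is_one s" using one_minimal t by blast
  have two: "ord_ge_two s" using n1 ne unfolding ord_is_one_def ord_ge_two_def by blast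
  obtain o1 where o1: "Well_order o1" "ord_is_one o1" "(o1, s) \<in> ordLess"
    using exists_one_below[OF wo two] by blast
  have o1ne: "Field o1 \<noteq> {}" using o1(2) unfolding ord_is_one_def by auto
  obtain D :: "nat \<Rightarrow> _" where D: "\<forall>k. closed (D k)" "U = (\<Union>k. D k)" using open_fsigma[OF o] by blast
  define G where "G n = (if even n then D (n div 2) else F (n div 2))" for n
  have "U \<union> X = (\<Union>n. G n)"
  proof
    show "U \<union> X \<subseteq> (\<Union>n. G n)"
    proof
      fix x assume "x \<in> U \<union> X"
      then show "x \<in> (\<Union>n. G n)"
      proof
        assume "x \<in> U" then obtain k where "x \<in> D k" using D by auto
        then have "x \<in> G (2*k)" by (simp add: G_def)
        then show ?thesis by blast
      next
        assume "x \<in> X" then obtain k where "x \<in> F k" using Sigma_union by auto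
        then have "x \<in> G (2*k+1)" by (simp add: G_def)
        then show ?thesis by blast
      qed
    qed
    show "(\<Union>n. G n) \<subseteq> U \<union> X"
    proof
      fix x assume "x \<in> (\<Union>n. G n)"
      then obtain n where n: "x \<in> G n" by auto
      show "x \<in> U \<union> X"
      proof (cases "even n")
        case True then have "x \<in> D (n div 2)" using n by (simp add: G_def)
        then show ?thesis using D(2) by blast
      next
        case False then have "x \<in> F (n div 2)" using n by (simp add: G_def)
        then show ?thesis using Sigma_union(1) by blast
      qed
    qed
  qed
  moreover have "\<forall>n. \<exists>t. (t, s) \<in> ordLess \<and> Field t \<noteq> {} \<and> borel_Sigma t (- G n)"
  proof
    fix n show "\<exists>t. (t, s) \<in> ordLess \<and> Field t \<noteq> {} \<and> borel_Sigma t (- G n)"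
    proof (cases "even n")
      case True
      have "borel_Sigma o1 (- D (n div 2))" by (intro Sigma_open[OF o1(1,2)] open_Compl) (use D(1) in blast)
      then show ?thesis using True o1 o1ne G_def by auto
    next
      case False then show ?thesis using Sigma_union(3) G_def by auto
    qed
  qed
  ultimately show ?thesis by (rule Sigma_unionI[OF wo])
qed

lemma Pi_closed_Un:
  fixes C :: "'a::metric_space set"
  assumes wo: "Well_order r" and two: "ord_ge_two r" and P: "borel_Pi r P" and c: "closed C"
  shows "borel_Pi r (C \<union> P)"
proof -
  have PS: "borel_Sigma r (- P)" using P unfolding borel_Pi_def .
  obtain F :: "nat \<Rightarrow> 'a set" where F: "- P = (\<Union>n. F n)" "\<forall>n. \<exists>s. (s, r) \<in> ordLess \<and> Field s \<noteq> {} \<and> borel_Sigma s (- F n)"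
    using Sigma_ge2_cases[OF two PS] by blast
  have oc: "open (- C)" using c by (simp add: open_Compl)
  obtain D :: "nat \<Rightarrow> 'a set" where D: "\<forall>k. closed (D k)" "- C = (\<Union>k. D k)" using open_fsigma[OF oc] by blast
  define G where "G m = D (fst (prod_decode m)) \<inter> F (snd (prod_decode m))" for m
  have "- (C \<union> P) = (\<Union>m. G m)"
  proof
    show "- (C \<union> P) \<subseteq> (\<Union>m. G m)"
    proof
      fix x assume x: "x \<in> - (C \<union> P)"
      then obtain k where k: "x \<in> D k" using D by auto
      obtain n where n: "x \<in> F n" using x F by auto
      have "x \<in> G (prod_encode (k, n))" using k n by (simp add: G_def)
      then show "x \<in> (\<Union>m. G m)" by blast
    qed
    show "(\<Union>m. G m) \<subseteq> - (C \<union> P)"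
    proof
      fix x assume "x \<in> (\<Union>m. G m)"
      then obtain m where m: "x \<in> G m" by auto
      have "x \<in> D (fst (prod_decode m))" "x \<in> F (snd (prod_decode m))" using m by (auto simp: G_def)
      then have "x \<in> - C" "x \<in> - P" using D(2) F(1) by blast+
      then show "x \<in> - (C \<union> P)" by auto
    qed
  qed
  moreover have "\<forall>m. \<exists>s. (s, r) \<in> ordLess \<and> Field s \<noteq> {} \<and> borel_Sigma s (- G m)"
  proof
    fix m
    obtain k n where kn: "prod_decode m = (k, n)" by (cases "prod_decode m")
    obtain s :: "nat rel" where s: "(s, r) \<in> ordLess" "Field s \<noteq> {}" "borel_Sigma s (- F n)" using F(2) by blast
    have ws: "Well_order s" using s(1) unfolding ordLess_def by auto
    have "borel_Sigma s (- D k \<union> - F n)" using Sigma_open_Un[OF ws s(2) s(3)] D(1) by (simp add: open_Compl)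
    moreover have "- G m = - D k \<union> - F n" by (simp add: G_def kn)
    ultimately show "\<exists>s. (s, r) \<in> ordLess \<and> Field s \<noteq> {} \<and> borel_Sigma s (- G m)" using s by auto
  qed
  ultimately show ?thesis unfolding borel_Pi_def by (rule Sigma_unionI[OF wo])
qed

lemma Pi_Inter:
  fixes P :: "nat \<Rightarrow> 'a::topological_space set"
  assumes wo: "Well_order r" and two: "ord_ge_two r" and P: "\<And>n. borel_Pi r (P n)"
  shows "borel_Pi r (\<Inter>n. P n)"
proof -
  have "\<forall>n. \<exists>F::nat \<Rightarrow> 'a set. - P n = (\<Union>k. F k) \<and> (\<forall>k. \<exists>s. (s, r) \<in> ordLess \<and> Field s \<noteq> {} \<and> borel_Sigma s (- F k))"
  proof
    fix n
    have "borel_Sigma r (- P n)" using P[of n] unfolding borel_Pi_def .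
    then show "\<exists>F::nat \<Rightarrow> 'a set. - P n = (\<Union>k. F k) \<and> (\<forall>k. \<exists>s. (s, r) \<in> ordLess \<and> Field s \<noteq> {} \<and> borel_Sigma s (- F k))"
      by (rule Sigma_ge2_cases[OF two])
  qed
  then obtain F :: "nat \<Rightarrow> nat \<Rightarrow> _" where F: "\<And>n. - P n = (\<Union>k. F n k)"
     "\<And>n k. \<exists>s. (s, r) \<in> ordLess \<and> Field s \<noteq> {} \<and> borel_Sigma s (- F n k)"
    by metis
  define G where "G m = F (fst (prod_decode m)) (snd (prod_decode m))" for m
  have "- (\<Inter>n. P n) = (\<Union>m. G m)"
  proof
    show "- (\<Inter>n. P n) \<subseteq> (\<Union>m. G m)"
    proof
      fix x assume "x \<in> - (\<Inter>n. P n)"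
      then obtain n where "x \<in> - P n" by auto
      then obtain k where "x \<in> F n k" using F(1) by auto
      then have "x \<in> G (prod_encode (n, k))" by (simp add: G_def)
      then show "x \<in> (\<Union>m. G m)" by blast
    qed
    show "(\<Union>m. G m) \<subseteq> - (\<Inter>n. P n)"
    proof
      fix x assume "x \<in> (\<Union>m. G m)"
      then obtain m where "x \<in> G m" by auto
      then have "x \<in> - P (fst (prod_decode m))" unfolding G_def using F(1) by blast
      then show "x \<in> - (\<Inter>n. P n)" by auto
    qed
  qed
  moreover have "\<forall>m. \<exists>s. (s, r) \<in> ordLess \<and> Field s \<noteq> {} \<and> borel_Sigma s (- G m)"
    using F(2) unfolding G_def by blast
  ultimately show ?thesis unfolding borel_Pi_def by (rule Sigma_unionI[OF wo])
qed

lemma Pi_UNIV: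
  assumes wo: "Well_order r" and two: "ord_ge_two r"
  shows "borel_Pi r (UNIV :: 'a::topological_space set)"
  unfolding borel_Pi_def using Sigma_closed[OF wo two, of "{} :: 'a set"] by simp

lemma Sigma_borel: "borel_Sigma r A \<Longrightarrow> A \<in> sets borel"
proof (induction rule: borel_Sigma.induct)
  case (Sigma_open r A) then show ?case by auto
next
  case (Sigma_union r F)
  have "\<forall>n. - F n \<in> sets borel" using Sigma_union.IH by blast
  then have "\<forall>n. F n \<in> sets borel" by (metis borel_comp double_complement)
  then show ?case by auto
qed

lemma Pi_borel: "borel_Pi r A \<Longrightarrow> A \<in> sets borel"
  unfolding borel_Pi_def by (metis Sigma_borel borel_comp double_complement)

lemma Pi_succ_Inter:
  fixes S :: "nat \<Rightarrow> 'a::topological_space set"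
  assumes succ: "ord_is_succ r' r" and ne: "Field r \<noteq> {}" and S: "\<And>n. borel_Sigma r (S n)"
  shows "borel_Pi r' (\<Inter>n. S n)"
proof -
  have wo: "Well_order r'" and lt: "(r, r') \<in> ordLess" using succ unfolding ord_is_succ_def by auto
  have "borel_Sigma r' (\<Union>n. - S n)"
    by (rule Sigma_union[OF wo]) (use lt ne S in auto)
  then show ?thesis unfolding borel_Pi_def by (simp add: Compl_INT)
qed



lemma meager_mono: "meager A \<Longrightarrow> B \<subseteq> A \<Longrightarrow> meager B"
  unfolding meager_def by blast

lemma nowhere_dense_meager: "nowhere_dense S \<Longrightarrow> meager S"
  unfolding meager_def by (rule exI[of _ "\<lambda>_::nat. S"]) auto

lemma meager_UN:
  fixes A :: "nat \<Rightarrow> 'a::topological_space set"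
  assumes "\<And>n. meager (A n)"
  shows "meager (\<Union>n. A n)"
proof -
  have "\<forall>n. \<exists>F::nat \<Rightarrow> 'a set. (\<forall>k. nowhere_dense (F k)) \<and> A n \<subseteq> (\<Union>k. F k)"
    using assms unfolding meager_def by blast
  then obtain F :: "nat \<Rightarrow> nat \<Rightarrow> 'a set" where F: "\<And>n k. nowhere_dense (F n k)" "\<And>n. A n \<subseteq> (\<Union>k. F n k)"
    by metis
  define G where "G m = F (fst (prod_decode m)) (snd (prod_decode m))" for m
  have "\<forall>m. nowhere_dense (G m)" using F(1) by (simp add: G_def)
  moreover have "(\<Union>n. A n) \<subseteq> (\<Union>m. G m)"
  proof
    fix x assume "x \<in> (\<Union>n. A n)"
    then obtain n where "x \<in> A n" by auto
    then obtain k where "x \<in> F n k" using F(2) by blast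
    then have "x \<in> G (prod_encode (n, k))" by (simp add: G_def)
    then show "x \<in> (\<Union>m. G m)" by blast
  qed
  ultimately show ?thesis unfolding meager_def by blast
qed

lemma meager_Un:
  fixes X Y :: "'a::topological_space set"
  assumes "meager X" "meager Y" shows "meager (X \<union> Y)"
proof -
  have "meager (\<Union>n::nat. if n = 0 then X else Y)" by (rule meager_UN) (use assms in auto)
  moreover have "X \<union> Y \<subseteq> (\<Union>n::nat. if n = 0 then X else Y)"
  proof
    fix x assume "x \<in> X \<union> Y"
    then show "x \<in> (\<Union>n::nat. if n = 0 then X else Y)"
    proof
      assume "x \<in> X" then have "x \<in> (if (0::nat) = 0 then X else Y)" by simp
      then show ?thesis by blast
    next
      assume "x \<in> Y" then have "x \<in> (if (1::nat) = 0 then X else Y)" by simp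
      then show ?thesis by blast
    qed
  qed
  ultimately show ?thesis by (rule meager_mono)
qed

lemma frontier_nowhere_dense:
  fixes U :: "'a::topological_space set"
  assumes "open U" shows "nowhere_dense (closure U - U)"
proof -
  have cl: "closed (closure U - U)" using assms by (simp add: closed_Diff)
  let ?W = "interior (closure U - U)"
  have oW: "open ?W" by simp
  have "?W \<inter> U = {}" using interior_subset by blast
  then have "?W \<inter> closure U = {}" using open_Int_closure_eq_empty[OF oW] by blast
  moreover have "?W \<subseteq> closure U" using interior_subset by blast
  ultimately have "?W = {}" by blast
  then show ?thesis unfolding nowhere_dense_def using cl by (simp add: closure_closed)
qed

lemma baire_rest:
  fixes A :: "'a::topological_space set" and B :: "nat \<Rightarrow> 'a set"
  assumes bp: "baire_property A"
    and Bbasis: "\<And>V x. open V \<Longrightarrow> x \<in> V \<Longrightarrow> \<exists>n. x \<in> B n \<and> B n \<subseteq> V"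
  shows "meager (- (\<Union>n\<in>{n. meager (A \<inter> B n)}. B n) - A)"
proof -
  obtain U where U: "open U" "meager ((A - U) \<union> (U - A))" using bp unfolding baire_property_def by blast
  let ?V = "\<Union>n\<in>{n. meager (A \<inter> B n)}. B n"
  have "interior (- U) \<subseteq> ?V"
  proof
    fix x assume x: "x \<in> interior (- U)"
    obtain n where n: "x \<in> B n" "B n \<subseteq> interior (- U)" using Bbasis[OF open_interior x] by blast
    have "A \<inter> B n \<subseteq> (A - U) \<union> (U - A)" using n(2) interior_subset by blast
    then have "meager (A \<inter> B n)" using U(2) meager_mono by blast
    then show "x \<in> ?V" using n(1) by blast
  qed
  then have "- ?V \<subseteq> closure U" using interior_complement by blast
  then have "- ?V - A \<subseteq> (closure U - U) \<union> ((A - U) \<union> (U - A))" by blast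
  moreover have "meager ((closure U - U) \<union> ((A - U) \<union> (U - A)))"
    using meager_Un[OF nowhere_dense_meager[OF frontier_nowhere_dense[OF U(1)]] U(2)] .
  ultimately show ?thesis using meager_mono by blast
qed

lemma hull_construct:
  fixes \<psi> :: "'a::topological_space set \<Rightarrow> 'a set" and B :: "nat \<Rightarrow> 'a set"
  assumes hull: "monotone_hull_op meager_ideal \<psi>"
    and Bbasis: "\<And>V x. open V \<Longrightarrow> x \<in> V \<Longrightarrow> \<exists>n. x \<in> B n \<and> B n \<subseteq> V"
    and bor: "\<And>A. A \<in> Baire_sets \<Longrightarrow>
       (\<Inter>n. if meager (A \<inter> B n) then - B n \<union> \<psi> (A \<inter> B n) else UNIV) \<in> sets borel"
  shows "monotone_hull_op Baire_sets (\<lambda>A. \<Inter>n. if meager (A \<inter> B n) then - B n \<union> \<psi> (A \<inter> B n) else UNIV)"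
proof -
  let ?T = "\<lambda>A n. if meager (A \<inter> B n) then - B n \<union> \<psi> (A \<inter> B n) else UNIV"
  have h1: "M \<subseteq> \<psi> M" and h2: "meager (\<psi> M - M)" if "meager M" for M
    using hull that unfolding monotone_hull_op_def hull_operation_def meager_ideal_def by auto
  have hm: "\<psi> M1 \<subseteq> \<psi> M2" if "meager M1" "meager M2" "M1 \<subseteq> M2" for M1 M2
    using hull that unfolding monotone_hull_op_def meager_ideal_def by auto
  have sub: "A \<subseteq> (\<Inter>n. ?T A n)" for A
  proof
    fix x assume x: "x \<in> A"
    show "x \<in> (\<Inter>n. ?T A n)"
    proof
      fix n
      show "x \<in> ?T A n"
      proof (cases "meager (A \<inter> B n)")
        case True
        then have "A \<inter> B n \<subseteq> \<psi> (A \<inter> B n)" by (rule h1)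
        then show ?thesis using True x by auto
      qed simp
    qed
  qed
  have rest: "meager ((\<Inter>n. ?T A n) - A)" if bpA: "baire_property A" for A
  proof -
    let ?E = "\<lambda>n. if meager (A \<inter> B n) then \<psi> (A \<inter> B n) - (A \<inter> B n) else {}"
    have mE: "meager (\<Union>n. ?E n)" by (rule meager_UN) (use h2 in \<open>auto intro: nowhere_dense_meager simp: nowhere_dense_def\<close>)
    have "(\<Inter>n. ?T A n) - A \<subseteq> (- (\<Union>n\<in>{n. meager (A \<inter> B n)}. B n) - A) \<union> (\<Union>n. ?E n)"
    proof
      fix x assume x: "x \<in> (\<Inter>n. ?T A n) - A"
      show "x \<in> (- (\<Union>n\<in>{n. meager (A \<inter> B n)}. B n) - A) \<union> (\<Union>n. ?E n)"
      proof (cases "x \<in> (\<Union>n\<in>{n. meager (A \<inter> B n)}. B n)")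
        case True
        then obtain n where n: "meager (A \<inter> B n)" "x \<in> B n" by blast
        have "x \<in> ?T A n" using x by blast
        then have "x \<in> \<psi> (A \<inter> B n)" using n by simp
        then have "x \<in> ?E n" using n x by simp
        then show ?thesis by blast
      next
        case False then show ?thesis using x by blast
      qed
    qed
    moreover have "meager ((- (\<Union>n\<in>{n. meager (A \<inter> B n)}. B n) - A) \<union> (\<Union>n. ?E n))"
      by (rule meager_Un[OF baire_rest[OF bpA Bbasis] mE])
    ultimately show ?thesis using meager_mono by blast
  qed
  have mono: "(\<Inter>n. ?T A1 n) \<subseteq> (\<Inter>n. ?T A2 n)" if "A1 \<subseteq> A2" for A1 A2
  proof -
    have "?T A1 n \<subseteq> ?T A2 n" for n
    proof (cases "meager (A2 \<inter> B n)")
      case True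
      have m1: "meager (A1 \<inter> B n)" using True that meager_mono by blast
      have "\<psi> (A1 \<inter> B n) \<subseteq> \<psi> (A2 \<inter> B n)" using hm[OF m1 True] that by blast
      then show ?thesis using True m1 by auto
    qed simp
    then show ?thesis by blast
  qed
  show ?thesis
    unfolding monotone_hull_op_def hull_operation_def
    using bor sub rest mono by (auto simp: Baire_sets_def meager_ideal_def)
qed



lemma nat_basis:
  "\<exists>B::nat \<Rightarrow> 'a::second_countable_topology set. (\<forall>n. open (B n)) \<and>
     (\<forall>V x. open V \<longrightarrow> x \<in> V \<longrightarrow> (\<exists>n. x \<in> B n \<and> B n \<subseteq> V))"
proof -
  obtain \<B> :: "'a set set" where cB: "countable \<B>" and tB: "topological_basis \<B>"
    using ex_countable_basis by blast
  have ne: "\<B> \<noteq> {}"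
  proof
    assume e: "\<B> = {}"
    obtain x :: 'a where True by simp
    obtain b where "b \<in> \<B>" "x \<in> b" "b \<subseteq> UNIV" using topological_basisE[OF tB open_UNIV, of x] by blast
    then show False using e by simp
  qed
  define B where "B n = from_nat_into \<B> n" for n
  have "\<forall>n. open (B n)" using from_nat_into[OF ne] topological_basis_open[OF tB] by (simp add: B_def)
  moreover have "\<forall>V x. open V \<longrightarrow> x \<in> V \<longrightarrow> (\<exists>n. x \<in> B n \<and> B n \<subseteq> V)"
  proof (intro allI impI)
    fix V :: "'a set" and x assume "open V" "x \<in> V"
    then obtain b where b: "b \<in> \<B>" "x \<in> b" "b \<subseteq> V" using topological_basisE[OF tB] by blast
    obtain n where "from_nat_into \<B> n = b" using from_nat_into_surj[OF cB b(1)] by blast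
    then show "\<exists>n. x \<in> B n \<and> B n \<subseteq> V" using b by (auto simp: B_def)
  qed
  ultimately show ?thesis by blast
qed

theorem corollary3p3:
  fixes r :: "nat rel"
  assumes "countable_ordinal r" and "ord_ge_two r"
  shows "((\<exists>\<psi> :: 'a::polish_space set \<Rightarrow> 'a set.
              monotone_hull_op meager_ideal \<psi> \<and> K_valued (borel_Sigma r) meager_ideal \<psi>)
          \<longrightarrow> (\<forall>r'. ord_is_succ r' r \<longrightarrow>
               (\<exists>\<phi> :: 'a set \<Rightarrow> 'a set.
                  monotone_hull_op Baire_sets \<phi> \<and> K_valued (borel_Pi r') Baire_sets \<phi>)))
       \<and> ((\<exists>\<psi> :: 'a::polish_space set \<Rightarrow> 'a set.
              monotone_hull_op meager_ideal \<psi> \<and> K_valued (borel_Pi r) meager_ideal \<psi>)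
          \<longrightarrow> (\<exists>\<phi> :: 'a set \<Rightarrow> 'a set.
                  monotone_hull_op Baire_sets \<phi> \<and> K_valued (borel_Pi r) Baire_sets \<phi>))"
proof -
  have wo: "Well_order r" using assms(1) by (simp add: countable_ordinal_def)
  have two: "ord_ge_two r" by (rule assms(2))
  have ne: "Field r \<noteq> {}" using two unfolding ord_ge_two_def by auto
  obtain B :: "nat \<Rightarrow> 'a set" where Bo: "\<forall>n. open (B n)"
    and Bb: "\<forall>V x. open V \<longrightarrow> x \<in> V \<longrightarrow> (\<exists>n. x \<in> B n \<and> B n \<subseteq> V)"
    using nat_basis by blast
  have Bbasis: "\<And>V x. open V \<Longrightarrow> x \<in> V \<Longrightarrow> \<exists>n. x \<in> B n \<and> B n \<subseteq> V" using Bb by blast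
  have cB: "closed (- B n)" for n using Bo by (simp add: closed_Compl)
  show ?thesis
  proof (intro conjI impI allI)
    fix r' assume succ: "ord_is_succ r' r"
    assume "\<exists>\<psi> :: 'a set \<Rightarrow> 'a set. monotone_hull_op meager_ideal \<psi> \<and> K_valued (borel_Sigma r) meager_ideal \<psi>"
    then obtain \<psi> :: "'a set \<Rightarrow> 'a set" where hull: "monotone_hull_op meager_ideal \<psi>"
      and K: "K_valued (borel_Sigma r) meager_ideal \<psi>" by blast
    let ?\<phi> = "\<lambda>A. \<Inter>n. if meager (A \<inter> B n) then - B n \<union> \<psi> (A \<inter> B n) else UNIV"
    have cls: "borel_Pi r' (?\<phi> A)" for A
    proof (rule Pi_succ_Inter[OF succ ne])
      fix n
      show "borel_Sigma r (if meager (A \<inter> B n) then - B n \<union> \<psi> (A \<inter> B n) else UNIV)"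
      proof (cases "meager (A \<inter> B n)")
        case True
        have "borel_Sigma r (\<psi> (A \<inter> B n))" using K True unfolding K_valued_def meager_ideal_def by blast
        then show ?thesis using Sigma_closed_Un[OF wo two _ cB] True by simp
      next
        case False then show ?thesis using Sigma_closed[OF wo two closed_UNIV] by simp
      qed
    qed
    have "monotone_hull_op Baire_sets ?\<phi>"
      using hull_construct[OF hull Bbasis Pi_borel[OF cls]] .
    moreover have "K_valued (borel_Pi r') Baire_sets ?\<phi>" using cls unfolding K_valued_def by blast
    ultimately show "\<exists>\<phi> :: 'a set \<Rightarrow> 'a set. monotone_hull_op Baire_sets \<phi> \<and> K_valued (borel_Pi r') Baire_sets \<phi>"
      by blast
  next
    assume "\<exists>\<psi> :: 'a set \<Rightarrow> 'a set. monotone_hull_op meager_ideal \<psi> \<and> K_valued (borel_Pi r) meager_ideal \<psi>"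
    then obtain \<psi> :: "'a set \<Rightarrow> 'a set" where hull: "monotone_hull_op meager_ideal \<psi>"
      and K: "K_valued (borel_Pi r) meager_ideal \<psi>" by blast
    let ?\<phi> = "\<lambda>A. \<Inter>n. if meager (A \<inter> B n) then - B n \<union> \<psi> (A \<inter> B n) else UNIV"
    have cls: "borel_Pi r (?\<phi> A)" for A
    proof (rule Pi_Inter[OF wo two])
      fix n
      show "borel_Pi r (if meager (A \<inter> B n) then - B n \<union> \<psi> (A \<inter> B n) else UNIV)"
      proof (cases "meager (A \<inter> B n)")
        case True
        have "borel_Pi r (\<psi> (A \<inter> B n))" using K True unfolding K_valued_def meager_ideal_def by blast
        then show ?thesis using Pi_closed_Un[OF wo two _ cB] True by simp
      next
        case False then show ?thesis using Pi_UNIV[OF wo two] by simp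
      qed
    qed
    have "monotone_hull_op Baire_sets ?\<phi>"
      using hull_construct[OF hull Bbasis Pi_borel[OF cls]] .
    moreover have "K_valued (borel_Pi r) Baire_sets ?\<phi>" using cls unfolding K_valued_def by blast
    ultimately show "\<exists>\<phi> :: 'a set \<Rightarrow> 'a set. monotone_hull_op Baire_sets \<phi> \<and> K_valued (borel_Pi r) Baire_sets \<phi>"
      by blast
  qed
qed


end
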